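(* Let $P\in\mathbb{F}_p[x,y]$ with $\deg_x P\leqslant m$ and $\deg_y P\leqslant n$. Define polynomials $q_k,r_k\in\mathbb{F}_p[x,y]$, $k\geqslant 1$, by $$q_1=-\frac{\partial P}{\partial x},\qquad r_1=\frac{\partial P}{\partial y},$$ $$q_{k+1}=\frac{\partial q_k}{\partial x}\Big(\frac{\partial P}{\partial y}\Big)^2-\frac{\partial q_k}{\partial y}\frac{\partial P}{\partial x}\frac{\partial P}{\partial y}-(2k-1)q_k\frac{\partial^2 P}{\partial x\partial y}\frac{\partial P}{\partial y}+(2k-1)q_k\frac{\partial^2 P}{\partial y^2}\frac{\partial P}{\partial x},$$ $$r_{k+1}=r_k\Big(\frac{\partial P}{\partial y}\Big)^2 .$$ Then for every $k\geqslant 1$: $$\deg_x q_k\leqslant (2k-1)m-k,\quad \deg_y q_k\leqslant (2k-1)n-k+1,\quad \deg_x r_k\leqslant (2k-1)m,\quad \deg_y r_k\leqslant (2k-1)(n-1).$$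
   Context: Partial derivatives are formal derivatives of polynomials. The degree of the zero polynomial (in either variable) is taken to be $-\infty$, so every degree bound holds for it. *)

theory Defs
  imports "HOL-Computational_Algebra.Polynomial" "Berlekamp_Zassenhaus.Finite_Field"
begin

text \<open>Bivariate polynomials in F_p[x,y] are encoded as 'a poly poly:
  the outer variable is y, the coefficients are polynomials in x.
  So coeff (coeff P j) i is the coefficient of x^i y^j.\<close>

definition pdx :: "'a::idom poly poly \<Rightarrow> 'a poly poly" where
  "pdx P = map_poly pderiv P"

definition pdy :: "'a::idom poly poly \<Rightarrow> 'a poly poly" where
  "pdy P = pderiv P"

text \<open>Degree bounds with the convention deg 0 = -infinity.\<close>
definition degx_le :: "'a::zero poly poly \<Rightarrow> int \<Rightarrow> bool" where
  "degx_le P d \<longleftrightarrow> (\<forall>i j. coeff (coeff P j) i \<noteq> 0 \<longrightarrow> int i \<le> d)"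

definition degy_le :: "'a::zero poly poly \<Rightarrow> int \<Rightarrow> bool" where
  "degy_le P d \<longleftrightarrow> (\<forall>j. coeff P j \<noteq> 0 \<longrightarrow> int j \<le> d)"

text \<open>q P k and r P k for k \<ge> 1 (the value at k = 0 is an unused dummy).\<close>
fun qs :: "'a::idom poly poly \<Rightarrow> nat \<Rightarrow> 'a poly poly" where
  "qs P 0 = 0"
| "qs P (Suc 0) = - pdx P"
| "qs P (Suc (Suc k)) =
     (let q = qs P (Suc k); c = of_nat (2 * Suc k - 1) in
      pdx q * (pdy P)^2 - pdy q * pdx P * pdy P
      - c * q * pdy (pdx P) * pdy P + c * q * pdy (pdy P) * pdx P)"

fun rs :: "'a::idom poly poly \<Rightarrow> nat \<Rightarrow> 'a poly poly" where
  "rs P 0 = 0"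
| "rs P (Suc 0) = pdy P"
| "rs P (Suc (Suc k)) = rs P (Suc k) * (pdy P)^2"

end

theory Submission
  imports Defs
begin

lemma sum_nz_ex: "sum f A \<noteq> 0 \<Longrightarrow> \<exists>x\<in>A. f x \<noteq> 0"
  by (metis sum.neutral)

lemma degy_mult:
  assumes "degy_le A a" "degy_le B b" shows "degy_le (A * B) (a + b)"
  unfolding degy_le_def
proof (intro allI impI)
  fix j assume "coeff (A*B) j \<noteq> 0"
  then obtain i where "i \<le> j" "coeff A i * coeff B (j-i) \<noteq> 0"
    by (auto simp: coeff_mult dest!: sum_nz_ex)
  then have "coeff A i \<noteq> 0" "coeff B (j-i) \<noteq> 0" by auto
  then have "int i \<le> a" "int (j-i) \<le> b" using assms unfolding degy_le_def by blast+
  then show "int j \<le> a + b" using \<open>i \<le> j\<close> by linarith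
qed

lemma degx_mult:
  assumes "degx_le A a" "degx_le B b" shows "degx_le (A * B) (a + b)"
  unfolding degx_le_def
proof (intro allI impI)
  fix i j assume "coeff (coeff (A*B) j) i \<noteq> 0"
  then obtain l t where "t \<le> i" "coeff (coeff A l) t * coeff (coeff B (j-l)) (i-t) \<noteq> 0"
    by (auto simp: coeff_mult coeff_sum dest!: sum_nz_ex)
  then have "coeff (coeff A l) t \<noteq> 0" "coeff (coeff B (j-l)) (i-t) \<noteq> 0" by auto
  then have "int t \<le> a" "int (i-t) \<le> b" using assms unfolding degx_le_def by blast+
  then show "int i \<le> a + b" using \<open>t \<le> i\<close> by linarith
qed

lemma degx_add: fixes A B :: "'a::comm_ring_1 poly poly" assumes "degx_le A a" "degx_le B a" shows "degx_le (A + B) a"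
  unfolding degx_le_def
proof (intro allI impI)
  fix i j assume "coeff (coeff (A + B) j) i \<noteq> 0"
  then have "coeff (coeff A j) i \<noteq> 0 \<or> coeff (coeff B j) i \<noteq> 0" by auto
  then show "int i \<le> a" using assms unfolding degx_le_def by (elim disjE) auto
qed
lemma degy_add: fixes A B :: "'a::comm_ring_1 poly poly" assumes "degy_le A a" "degy_le B a" shows "degy_le (A + B) a"
  unfolding degy_le_def
proof (intro allI impI)
  fix j assume "coeff (A + B) j \<noteq> 0"
  then have "coeff A j \<noteq> 0 \<or> coeff B j \<noteq> 0" by auto
  then show "int j \<le> a" using assms unfolding degy_le_def by (elim disjE) auto
qed
lemma degx_minus: "degx_le A a \<Longrightarrow> degx_le (- A) a"
  unfolding degx_le_def by simp
lemma degy_minus: "degy_le A a \<Longrightarrow> degy_le (- A) a"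
  unfolding degy_le_def by simp
lemma degx_diff: fixes A B :: "'a::comm_ring_1 poly poly" assumes "degx_le A a" "degx_le B a" shows "degx_le (A - B) a"
proof -
  have "degx_le (A + - B) a" by (intro degx_add degx_minus assms)
  then show ?thesis by simp
qed
lemma degy_diff: fixes A B :: "'a::comm_ring_1 poly poly" assumes "degy_le A a" "degy_le B a" shows "degy_le (A - B) a"
proof -
  have "degy_le (A + - B) a" by (intro degy_add degy_minus assms)
  then show ?thesis by simp
qed
lemma degx_mono: "degx_le A a \<Longrightarrow> a \<le> b \<Longrightarrow> degx_le A b"
  unfolding degx_le_def by force
lemma degy_mono: "degy_le A a \<Longrightarrow> a \<le> b \<Longrightarrow> degy_le A b"
  unfolding degy_le_def by force
lemma coeff_const_nz: "coeff [:c:] j \<noteq> 0 \<Longrightarrow> j = 0" by (cases j) auto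
lemma degx_nat: "degx_le (of_nat c) 0"
  unfolding degx_le_def of_nat_poly
proof (intro allI impI)
  fix i j assume "coeff (coeff [:[:of_nat c:]:] j) i \<noteq> 0"
  then show "int i \<le> 0" by (cases j) (auto dest: coeff_const_nz)
qed
lemma degy_nat: "degy_le (of_nat c) 0"
  unfolding degy_le_def by (auto simp: of_nat_poly dest: coeff_const_nz)

lemma degx_pdx: "degx_le A a \<Longrightarrow> degx_le (pdx A) (a - 1)"
  unfolding degx_le_def pdx_def
  by (auto simp: coeff_map_poly coeff_pderiv)
lemma degy_pdx: "degy_le A a \<Longrightarrow> degy_le (pdx A) a"
  unfolding degy_le_def pdx_def by (auto simp: coeff_map_poly)
    (metis pderiv_0)
lemma degy_pdy: "degy_le A a \<Longrightarrow> degy_le (pdy A) (a - 1)"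
  unfolding degy_le_def pdy_def
  by (auto simp: coeff_pderiv)
lemma degx_pdy: "degx_le A a \<Longrightarrow> degx_le (pdy A) a"
  unfolding degx_le_def pdy_def
  by (auto simp: coeff_pderiv of_nat_poly)

lemma main:
  fixes P :: "'a::idom poly poly" and m n k :: nat
  assumes X: "degx_le P (int m)" and Y: "degy_le P (int n)"
  shows "degx_le (qs P (Suc k)) ((2 * int k + 1) * int m - int k - 1)
       \<and> degy_le (qs P (Suc k)) ((2 * int k + 1) * int n - int k)
       \<and> degx_le (rs P (Suc k)) ((2 * int k + 1) * int m)
       \<and> degy_le (rs P (Suc k)) ((2 * int k + 1) * (int n - 1))"
proof -
  have x1: "degx_le (pdx P) (int m - 1)" using X by (rule degx_pdx)
  have x2: "degx_le (pdy P) (int m)" using X by (rule degx_pdy)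
  have x3: "degx_le (pdy (pdx P)) (int m - 1)" using x1 by (rule degx_pdy)
  have x4: "degx_le (pdy (pdy P)) (int m)" using x2 by (rule degx_pdy)
  have y1: "degy_le (pdx P) (int n)" using Y by (rule degy_pdx)
  have y2: "degy_le (pdy P) (int n - 1)" using Y by (rule degy_pdy)
  have y3: "degy_le (pdy (pdx P)) (int n - 1)" using y1 by (rule degy_pdy)
  have y4: "degy_le (pdy (pdy P)) (int n - 1 - 1)" using y2 by (rule degy_pdy)
  show ?thesis
  proof (induction k)
    case 0
    then show ?case using x1 y1 x2 y2
      by (auto intro: degx_minus degy_minus)
  next
    case (Suc k)
    define q where "q = qs P (Suc k)"
    define c where "c = (of_nat (2 * Suc k - 1) :: 'a poly poly)"
    define a where "a = (2 * int k + 1) * int m - int k - 1"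
    define b where "b = (2 * int k + 1) * int n - int k"
    have qx: "degx_le q a" and qy: "degy_le q b"
      using Suc unfolding q_def a_def b_def by auto
    have cx: "degx_le c 0" and cy: "degy_le c 0" unfolding c_def by (rule degx_nat degy_nat)+
    have e: "qs P (Suc (Suc k)) = pdx q * (pdy P * pdy P) - pdy q * pdx P * pdy P
      - c * q * pdy (pdx P) * pdy P + c * q * pdy (pdy P) * pdx P"
      unfolding q_def c_def by (simp add: Let_def power2_eq_square)
    let ?A = "(2 * int (Suc k) + 1) * int m - int (Suc k) - 1"
    let ?B = "(2 * int (Suc k) + 1) * int n - int (Suc k)"
    have t1x: "degx_le (pdx q * (pdy P * pdy P)) ((a - 1) + (int m + int m))"
      by (intro degx_mult degx_pdx qx x2)
    have t2x: "degx_le (pdy q * pdx P * pdy P) ((a + (int m - 1)) + int m)"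
      by (intro degx_mult degx_pdy qx x1 x2)
    have t3x: "degx_le (c * q * pdy (pdx P) * pdy P) (((0 + a) + (int m - 1)) + int m)"
      by (intro degx_mult cx qx x3 x2)
    have t4x: "degx_le (c * q * pdy (pdy P) * pdx P) (((0 + a) + int m) + (int m - 1))"
      by (intro degx_mult cx qx x4 x1)
    have t1y: "degy_le (pdx q * (pdy P * pdy P)) (b + ((int n - 1) + (int n - 1)))"
      by (intro degy_mult degy_pdx qy y2)
    have t2y: "degy_le (pdy q * pdx P * pdy P) (((b - 1) + int n) + (int n - 1))"
      by (intro degy_mult degy_pdy qy y1 y2)
    have t3y: "degy_le (c * q * pdy (pdx P) * pdy P) (((0 + b) + (int n - 1)) + (int n - 1))"
      by (intro degy_mult cy qy y3 y2)
    have t4y: "degy_le (c * q * pdy (pdy P) * pdx P) (((0 + b) + (int n - 1 - 1)) + int n)"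
      by (intro degy_mult cy qy y4 y1)
    have QX: "degx_le (qs P (Suc (Suc k))) ?A" unfolding e
      by (intro degx_add degx_diff; rule degx_mono, rule t1x t2x t3x t4x) (auto simp: a_def algebra_simps)
    have QY: "degy_le (qs P (Suc (Suc k))) ?B" unfolding e
      by (intro degy_add degy_diff; rule degy_mono, rule t1y t2y t3y t4y) (auto simp: b_def algebra_simps)
    have rx: "degx_le (rs P (Suc k)) ((2 * int k + 1) * int m)"
      and ry: "degy_le (rs P (Suc k)) ((2 * int k + 1) * (int n - 1))" using Suc by auto
    have RX: "degx_le (rs P (Suc (Suc k))) ((2 * int (Suc k) + 1) * int m)"
      by (simp only: rs.simps power2_eq_square, rule degx_mono, rule degx_mult[OF rx degx_mult[OF x2 x2]])
        (simp add: algebra_simps)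
    have RY: "degy_le (rs P (Suc (Suc k))) ((2 * int (Suc k) + 1) * (int n - 1))"
      by (simp only: rs.simps power2_eq_square, rule degy_mono, rule degy_mult[OF ry degy_mult[OF y2 y2]])
        (simp add: algebra_simps)
    show ?case using QX QY RX RY by blast
  qed
qed

theorem lemma4:
  fixes P :: "'p::prime_card mod_ring poly poly" and m n k :: nat
  assumes "degx_le P (int m)" and "degy_le P (int n)" and "k \<ge> 1"
  shows "degx_le (qs P k) ((2 * int k - 1) * int m - int k)
       \<and> degy_le (qs P k) ((2 * int k - 1) * int n - int k + 1)
       \<and> degx_le (rs P k) ((2 * int k - 1) * int m)
       \<and> degy_le (rs P k) ((2 * int k - 1) * (int n - 1))"
proof -
  obtain j where k: "k = Suc j" using assms(3) by (cases k) auto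
  have h: "(2 * int k - 1) = 2 * int j + 1" "int k = int j + 1" using k by auto
  show ?thesis using main[OF assms(1,2), of j] unfolding k[symmetric] h
    by (simp add: algebra_simps)
qed

end
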